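(* Let $Q$ be the quiver with one vertex and $2e$ loops, $e\ge1$, and let $d\geq 1$, $v\in\mathbb{Z}$. Then $S^d_v$ consists of the partitions $d=d_1+\dots+d_k$ such that for all $1\le i\le k$ $$\tfrac12 d_i\Big(\sum_{j<i}d_j-\sum_{j>i}d_j\Big)+\frac{vd_i}{d}\in\mathbb{Z}.$$ Moreover, $S^d_v=\{d\}$ if and only if either $\gcd(d,v)=1$ and $d\not\equiv2\pmod 4$, or $\gcd(d,v)=2$ and $d\equiv2\pmod4$.
   Context: Here $R(d)=\mathfrak{gl}(d)^{\oplus 2e}$ with $G(d)=GL(d)$ acting by conjugation, $\mathfrak{g}(d)=\mathfrak{gl}(d)$, diagonal torus with weights $\beta_1,\dots,\beta_d$, $\tau_d=\frac1d\sum_a\beta_a$. For a cocharacter $\lambda$, $n_\lambda=\langle\lambda,\det(R(d)^\vee)^{\lambda>0}\rangle-\langle\lambda,\det(\mathfrak{g}(d)^\vee)^{\lambda>0}\rangle$ ($V^{\lambda>0}$: span of weights pairing positively with $\lambda$). A cocharacter has associated partition $(d_j)_j$ if its $j$-th distinct weight on $\beta_1,\dots,\beta_d$ occurs $d_j$ times. $S^d_v$ is the set of partitions of $d$ such that $n_\lambda/2+\langle\lambda,v\tau_d\rangle\in\mathbb{Z}$ for every cocharacter $\lambda$ with that associated partition; $\{d\}$ denotes the one-term partition. *)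

theory Defs
  imports Complex_Main
begin

text \<open>Weights of the maximal torus of GL(d) are encoded as integer coefficient
  vectors w :: nat \<Rightarrow> int, meaning sum over a<d of w a * beta_a.
  Cocharacters are integer vectors lam :: nat \<Rightarrow> int (only entries a<d matter).\<close>

definition pair :: "nat \<Rightarrow> (nat \<Rightarrow> int) \<Rightarrow> (nat \<Rightarrow> int) \<Rightarrow> int" where
  "pair d lam w = (\<Sum>a<d. lam a * w a)"

definition root :: "nat \<Rightarrow> nat \<Rightarrow> (nat \<Rightarrow> int)" where
  "root a b = (\<lambda>x. (if x = a then 1 else 0) - (if x = b then 1 else 0))"

definition gl_weights :: "nat \<Rightarrow> (nat \<Rightarrow> int) list" where
  "gl_weights d = concat (map (\<lambda>a. map (\<lambda>b. root a b) [0..<d]) [0..<d])"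

definition dual_weights :: "(nat \<Rightarrow> int) list \<Rightarrow> (nat \<Rightarrow> int) list" where
  "dual_weights W = map (\<lambda>w x. - w x) W"

text \<open>weights of R(d) = gl(d)^(2e)\<close>
definition R_weights :: "nat \<Rightarrow> nat \<Rightarrow> (nat \<Rightarrow> int) list" where
  "R_weights d e = concat (replicate (2*e) (gl_weights d))"

text \<open>pairing of lam with det(V^{lam>0}), V given by its list of weights\<close>
definition det_pos_pair :: "nat \<Rightarrow> (nat \<Rightarrow> int) \<Rightarrow> (nat \<Rightarrow> int) list \<Rightarrow> int" where
  "det_pos_pair d lam W = sum_list (filter (\<lambda>t. t > 0) (map (pair d lam) W))"

definition n_lam :: "nat \<Rightarrow> nat \<Rightarrow> (nat \<Rightarrow> int) \<Rightarrow> int" where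
  "n_lam d e lam = det_pos_pair d lam (dual_weights (R_weights d e))
                   - det_pos_pair d lam (dual_weights (gl_weights d))"

text \<open>pairing of lam with tau_d = (1/d) sum beta_a\<close>
definition tau_pair :: "nat \<Rightarrow> (nat \<Rightarrow> int) \<Rightarrow> real" where
  "tau_pair d lam = (\<Sum>a<d. real_of_int (lam a)) / real d"

text \<open>associated partition: the j-th distinct value of lam on 0..d-1
  (values listed in increasing order) occurs d_j times\<close>
definition assoc_partition :: "nat \<Rightarrow> (nat \<Rightarrow> int) \<Rightarrow> nat list" where
  "assoc_partition d lam =
     map (\<lambda>c. card {a \<in> {0..<d}. lam a = c}) (sorted_list_of_set (lam ` {0..<d}))"

definition is_partition :: "nat \<Rightarrow> nat list \<Rightarrow> bool" where
  "is_partition d p \<longleftrightarrow> (\<forall>x\<in>set p. x > 0) \<and> sum_list p = d"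

definition S_set :: "nat \<Rightarrow> nat \<Rightarrow> int \<Rightarrow> nat list set" where
  "S_set d e v = {p. is_partition d p \<and>
      (\<forall>lam. assoc_partition d lam = p \<longrightarrow>
         real_of_int (n_lam d e lam) / 2 + real_of_int v * tau_pair d lam \<in> \<int>)}"

end

theory Submission
  imports Defs
begin


definition Qf :: "nat \<Rightarrow> (nat \<Rightarrow> int) \<Rightarrow> int" where
  "Qf d lam = (\<Sum>a<d. \<Sum>b<d. max (lam b - lam a) 0)"

lemma filter_pos_sum: "sum_list (filter (\<lambda>t. t > 0) xs) = sum_list (map (\<lambda>t. max t (0::int)) xs)"
  by (induction xs) auto

lemma sum_list_concat': "sum_list (concat xss) = sum_list (map sum_list xss)"
  by (induction xss) auto

lemma det_rep: "det_pos_pair d lam (dual_weights (concat (replicate n W))) = int n * det_pos_pair d lam (dual_weights W)"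
  by (induction n) (auto simp: det_pos_pair_def dual_weights_def algebra_simps)

lemma pair_root: "a < d \<Longrightarrow> b < d \<Longrightarrow> pair d lam (\<lambda>x. - root a b x) = lam b - lam a"
proof -
  assume "a < d" "b < d"
  have "pair d lam (\<lambda>x. - root a b x) = (\<Sum>x<d. (if x = b then lam x else 0)) - (\<Sum>x<d. (if x = a then lam x else 0))"
    unfolding pair_def sum_subtractf[symmetric] by (rule sum.cong) (auto simp: root_def)
  also have "\<dots> = lam b - lam a" using \<open>a<d\<close> \<open>b<d\<close> by simp
  finally show ?thesis .
qed

lemma det_gl: "det_pos_pair d lam (dual_weights (gl_weights d)) = Qf d lam"
proof -
  have "det_pos_pair d lam (dual_weights (gl_weights d)) =
     sum_list (map (\<lambda>a. sum_list (map (\<lambda>b. max (pair d lam (\<lambda>x. - root a b x)) 0) [0..<d])) [0..<d])"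
    unfolding det_pos_pair_def dual_weights_def gl_weights_def filter_pos_sum
    by (simp add: map_concat sum_list_concat' comp_def)
  also have "\<dots> = Qf d lam"
    unfolding Qf_def interv_sum_list_conv_sum_set_nat
    by (auto simp: pair_root atLeast0LessThan intro!: sum.cong)
  finally show ?thesis .
qed

lemma n_lam_Q: "e \<ge> 1 \<Longrightarrow> n_lam d e lam = (2 * int e - 1) * Qf d lam"
  unfolding n_lam_def R_weights_def det_rep det_gl by (simp add: algebra_simps)



lemma grp:
  fixes f :: "int \<Rightarrow> 'b::comm_ring_1"
  shows "(\<Sum>a<d. f (lam a)) = (\<Sum>i<length (assoc_partition d lam).
      of_nat (assoc_partition d lam ! i) * f (sorted_list_of_set (lam ` {0..<d}) ! i))"
proof -
  let ?cs = "sorted_list_of_set (lam ` {0..<d})"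
  have fin: "finite (lam ` {0..<d})" by simp
  have "(\<Sum>a<d. f (lam a)) = (\<Sum>a\<in>{0..<d}. f (lam a))" by (simp add: atLeast0LessThan)
  also have "\<dots> = (\<Sum>y\<in>lam ` {0..<d}. \<Sum>a\<in>{a\<in>{0..<d}. lam a = y}. f (lam a))"
    by (rule sum.image_gen) simp
  also have "\<dots> = (\<Sum>y\<in>lam ` {0..<d}. of_nat (card {a\<in>{0..<d}. lam a = y}) * f y)"
    by (rule sum.cong) auto
  also have "\<dots> = sum_list (map (\<lambda>y. of_nat (card {a\<in>{0..<d}. lam a = y}) * f y) ?cs)"
    by (subst sum_list_distinct_conv_sum_set) auto
  also have "\<dots> = (\<Sum>i<length (assoc_partition d lam).
      of_nat (assoc_partition d lam ! i) * f (?cs ! i))"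
    unfolding sum_list_sum_nth assoc_partition_def by (simp add: atLeast0LessThan)
  finally show ?thesis .
qed

lemma tri1: "(i::nat) \<le> k \<Longrightarrow> (\<Sum>j<i. h j) = (\<Sum>j<k. if j < i then h j else (0::'b::comm_ring_1))"
proof -
  assume "i \<le> k"
  then have eq: "{..<i} = {j\<in>{..<k}. j < i}" by auto
  show ?thesis by (subst eq) (rule sum.inter_filter, simp)
qed

lemma tri2: "(\<Sum>j\<in>{(i::nat)<..<k}. h j) = (\<Sum>j<k. if i < j then h j else (0::'b::comm_ring_1))"
proof -
  have eq: "{i<..<k} = {j\<in>{..<k}. i < j}" by auto
  show ?thesis by (subst eq) (rule sum.inter_filter, simp)
qed

lemma ident:
  fixes cs :: "int list" and D :: "nat \<Rightarrow> int"
  assumes "sorted_wrt (<) cs" "k = length cs"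
  shows "(\<Sum>i<k. \<Sum>j<k. D i * D j * max (cs!j - cs!i) 0) =
         (\<Sum>i<k. cs!i * D i * ((\<Sum>j<i. D j) - (\<Sum>j\<in>{i<..<k}. D j)))"
proof -
  have mx: "max (cs!j - cs!i) 0 = (if i < j then cs!j - cs!i else 0)" if "i<k" "j<k" for i j
  proof -
    consider "i<j" | "i=j" | "j<i" by arith
    then show ?thesis using assms that by cases (auto simp: sorted_wrt_iff_nth_less)
  qed
  have "(\<Sum>i<k. \<Sum>j<k. D i * D j * max (cs!j - cs!i) 0) =
        (\<Sum>i<k. \<Sum>j<k. (if i < j then D i * D j * cs!j else 0)) -
        (\<Sum>i<k. \<Sum>j<k. (if i < j then D i * D j * cs!i else 0))"
    unfolding sum_subtractf[symmetric]
    by (intro sum.cong refl) (auto simp: mx algebra_simps)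
  also have "(\<Sum>i<k. \<Sum>j<k. (if i < j then D i * D j * cs!j else 0)) =
      (\<Sum>j<k. cs!j * D j * (\<Sum>i<j. D i))"
  proof -
    have "(\<Sum>i<k. \<Sum>j<k. (if i < j then D i * D j * cs!j else 0)) =
       (\<Sum>j<k. \<Sum>i<k. (if i < j then D i * D j * cs!j else 0))" by (rule sum.swap)
    also have "\<dots> = (\<Sum>j<k. cs!j * D j * (\<Sum>i<k. if i < j then D i else 0))"
      by (intro sum.cong refl) (auto simp: sum_distrib_left algebra_simps intro!: sum.cong)
    also have "\<dots> = (\<Sum>j<k. cs!j * D j * (\<Sum>i<j. D i))"
      by (intro sum.cong refl) (simp add: tri1[of _ k, symmetric])
    finally show ?thesis .
  qed
  also have "(\<Sum>i<k. \<Sum>j<k. (if i < j then D i * D j * cs!i else 0)) =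
      (\<Sum>i<k. cs!i * D i * (\<Sum>j\<in>{i<..<k}. D j))"
    by (intro sum.cong refl) (auto simp: tri2 sum_distrib_left algebra_simps intro!: sum.cong)
  finally show ?thesis by (simp add: sum_subtractf[symmetric] algebra_simps)
qed



definition Af :: "nat list \<Rightarrow> nat \<Rightarrow> int \<Rightarrow> nat \<Rightarrow> real" where
  "Af p d v i = (1/2) * real (p ! i) *
                    (real (\<Sum>j<i. p ! j) - real (\<Sum>j\<in>{i<..<length p}. p ! j))
                  + real_of_int v * real (p ! i) / real d"

lemma expr:
  assumes "e \<ge> 1" "d \<ge> 1"
  shows "real_of_int (n_lam d e lam) / 2 + real_of_int v * tau_pair d lam =
    real_of_int ((int e - 1) * Qf d lam) +
    (\<Sum>i<length (assoc_partition d lam). real_of_int (sorted_list_of_set (lam ` {0..<d}) ! i)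
        * Af (assoc_partition d lam) d v i)"
proof -
  define p where "p = assoc_partition d lam"
  define cs where "cs = sorted_list_of_set (lam ` {0..<d})"
  define k where "k = length p"
  have lk: "k = length cs" unfolding k_def p_def cs_def assoc_partition_def by simp
  have srt: "sorted_wrt (<) cs" unfolding cs_def by (rule strict_sorted_list_of_set)
  have Q1: "Qf d lam = (\<Sum>i<k. \<Sum>j<k. int (p!i) * int (p!j) * max (cs!j - cs!i) 0)"
  proof -
    have "Qf d lam = (\<Sum>a<d. (\<Sum>j<k. of_nat (p!j) * max (cs!j - lam a) 0))"
      unfolding Qf_def p_def cs_def k_def
      by (rule sum.cong[OF refl], rule grp[of "\<lambda>y. max (y - _) 0"])
    also have "\<dots> = (\<Sum>i<k. of_nat (p!i) * (\<Sum>j<k. of_nat (p!j) * max (cs!j - cs!i) 0))"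
      unfolding p_def cs_def k_def by (rule grp[of "\<lambda>y. (\<Sum>j<_. of_nat (_!j) * max (_!j - y) 0)"])
    finally show ?thesis by (simp add: sum_distrib_left algebra_simps)
  qed
  have Q2: "Qf d lam = (\<Sum>i<k. cs!i * int (p!i) * ((\<Sum>j<i. int (p!j)) - (\<Sum>j\<in>{i<..<k}. int (p!j))))"
    unfolding Q1 by (rule ident[OF srt lk])
  have L: "(\<Sum>a<d. lam a) = (\<Sum>i<k. of_nat (p!i) * cs!i)"
    unfolding p_def cs_def k_def by (rule grp[of "\<lambda>y. y"])
  have tau: "tau_pair d lam = real_of_int (\<Sum>a<d. lam a) / real d"
    unfolding tau_pair_def by simp
  have dpos: "real d > 0" using assms by simp
  have h1: "real_of_int (n_lam d e lam) / 2 = real_of_int ((int e - 1) * Qf d lam) + real_of_int (Qf d lam) / 2"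
    unfolding n_lam_Q[OF assms(1)] by (simp add: field_simps)
  have h2: "real_of_int (Qf d lam) / 2 + real_of_int v * tau_pair d lam =
     (\<Sum>i<k. real_of_int (cs!i) * Af p d v i)"
    unfolding tau L Q2 Af_def k_def
    apply (simp add: sum_divide_distrib sum_distrib_left sum.distrib[symmetric] algebra_simps)
    apply (rule sum.cong[OF refl])
    by (simp add: sum_divide_distrib diff_divide_distrib)
  have "real_of_int (n_lam d e lam) / 2 + real_of_int v * tau_pair d lam =
    real_of_int ((int e - 1) * Qf d lam) + (\<Sum>i<k. real_of_int (cs!i) * Af p d v i)"
    using h1 h2 by linarith
  then show ?thesis unfolding p_def cs_def k_def .
qed



lemma realize:
  fixes C :: "nat \<Rightarrow> int"
  assumes part: "is_partition d p" and mono: "\<And>i j. i < j \<Longrightarrow> j < length p \<Longrightarrow> C i < C j"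
  shows "\<exists>lam. assoc_partition d lam = p \<and>
     (\<forall>i<length p. sorted_list_of_set (lam ` {0..<d}) ! i = C i)"
proof -
  define k where "k = length p"
  define xs where "xs = concat (map (\<lambda>i. replicate (p!i) (C i)) [0..<k])"
  define lam where "lam = (\<lambda>a. xs ! a)"
  have pos: "\<And>i. i < k \<Longrightarrow> p!i > 0" using part unfolding is_partition_def k_def by auto
  have inj: "\<And>i j. i < k \<Longrightarrow> j < k \<Longrightarrow> C i = C j \<Longrightarrow> i = j"
    using mono unfolding k_def by (metis less_irrefl nat_neq_iff)
  have len: "length xs = d"
  proof -
    have "length xs = sum_list (map (\<lambda>i. p!i) [0..<k])"
      unfolding xs_def length_concat by (simp add: comp_def)
    also have "\<dots> = sum_list p" unfolding k_def by (simp add: map_nth)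
    finally show ?thesis using part unfolding is_partition_def by simp
  qed
  have img: "lam ` {0..<d} = C ` {..<k}"
  proof -
    have "lam ` {0..<d} = set xs" unfolding lam_def using len by (auto simp: set_conv_nth)
    also have "\<dots> = C ` {..<k}" unfolding xs_def using pos by force
    finally show ?thesis .
  qed
  have srt: "sorted_list_of_set (lam ` {0..<d}) = map C [0..<k]"
  proof -
    have "sorted_wrt (<) (map C [0..<k])"
      unfolding sorted_wrt_iff_nth_less using mono unfolding k_def by auto
    moreover have "set (map C [0..<k]) = set (sorted_list_of_set (lam ` {0..<d}))"
      unfolding img by auto
    ultimately show ?thesis
      using strict_sorted_equal[of "map C [0..<k]" "sorted_list_of_set (lam ` {0..<d})"]
      by (simp add: strict_sorted_list_of_set)
  qed
  have cnt: "card {a \<in> {0..<d}. lam a = C i} = p!i" if "i < k" for i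
  proof -
    have "card {a \<in> {0..<d}. lam a = C i} = card {a. a < length xs \<and> xs ! a = C i}"
      unfolding lam_def len by (intro arg_cong[where f=card]) auto
    also have "\<dots> = length (filter (\<lambda>y. y = C i) xs)" by (rule length_filter_conv_card[symmetric])
    also have "\<dots> = sum_list (map (\<lambda>j. if C j = C i then p!j else 0) [0..<k])"
      unfolding xs_def by (auto simp: filter_concat length_concat comp_def filter_replicate intro!: arg_cong[where f=sum_list])
    also have "\<dots> = (\<Sum>j<k. if j = i then p!j else 0)"
      unfolding interv_sum_list_conv_sum_set_nat
      by (intro sum.cong) (auto simp: atLeast0LessThan dest: inj[OF _ that])
    also have "\<dots> = p!i" using that by simp
    finally show ?thesis .
  qed
  have "assoc_partition d lam = p"
    unfolding assoc_partition_def srt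
    by (rule nth_equalityI) (simp_all add: k_def cnt del: atLeastLessThan_iff)
  moreover have "\<forall>i<length p. sorted_list_of_set (lam ` {0..<d}) ! i = C i"
    unfolding srt k_def by simp
  ultimately show ?thesis by blast
qed



lemma part1:
  assumes e: "e \<ge> 1" and d: "d \<ge> 1" and part: "is_partition d p"
  shows "(\<forall>lam. assoc_partition d lam = p \<longrightarrow>
         real_of_int (n_lam d e lam) / 2 + real_of_int v * tau_pair d lam \<in> \<int>) \<longleftrightarrow>
         (\<forall>i<length p. Af p d v i \<in> \<int>)"
proof
  assume H: "\<forall>i<length p. Af p d v i \<in> \<int>"
  show "\<forall>lam. assoc_partition d lam = p \<longrightarrow>
         real_of_int (n_lam d e lam) / 2 + real_of_int v * tau_pair d lam \<in> \<int>"
  proof (intro allI impI)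
    fix lam assume A: "assoc_partition d lam = p"
    show "real_of_int (n_lam d e lam) / 2 + real_of_int v * tau_pair d lam \<in> \<int>"
      unfolding expr[OF e d] A using H
      by (intro Ints_add Ints_of_int Ints_sum Ints_mult) auto
  qed
next
  assume H: "\<forall>lam. assoc_partition d lam = p \<longrightarrow>
         real_of_int (n_lam d e lam) / 2 + real_of_int v * tau_pair d lam \<in> \<int>"
  show "\<forall>i<length p. Af p d v i \<in> \<int>"
  proof (intro allI impI)
    fix m assume m: "m < length p"
    define C1 :: "nat \<Rightarrow> int" where "C1 = (\<lambda>i. int (if i < m then i else i+1))"
    define C2 :: "nat \<Rightarrow> int" where "C2 = (\<lambda>i. int (if i < Suc m then i else i+1))"
    obtain lam1 where l1: "assoc_partition d lam1 = p"
       "\<forall>i<length p. sorted_list_of_set (lam1 ` {0..<d}) ! i = C1 i"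
      using realize[OF part, of C1] unfolding C1_def by fastforce
    obtain lam2 where l2: "assoc_partition d lam2 = p"
       "\<forall>i<length p. sorted_list_of_set (lam2 ` {0..<d}) ! i = C2 i"
      using realize[OF part, of C2] unfolding C2_def by fastforce
    define E1 where "E1 = real_of_int (n_lam d e lam1) / 2 + real_of_int v * tau_pair d lam1"
    define E2 where "E2 = real_of_int (n_lam d e lam2) / 2 + real_of_int v * tau_pair d lam2"
    have E1: "E1 = real_of_int ((int e - 1) * Qf d lam1) + (\<Sum>i<length p. real_of_int (C1 i) * Af p d v i)"
      unfolding E1_def expr[OF e d] l1(1) using l1(2) by simp
    have E2: "E2 = real_of_int ((int e - 1) * Qf d lam2) + (\<Sum>i<length p. real_of_int (C2 i) * Af p d v i)"
      unfolding E2_def expr[OF e d] l2(1) using l2(2) by simp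
    have "(\<Sum>i<length p. real_of_int (C1 i) * Af p d v i) - (\<Sum>i<length p. real_of_int (C2 i) * Af p d v i)
       = (\<Sum>i<length p. if i = m then Af p d v i else 0)"
      unfolding sum_subtractf[symmetric] by (intro sum.cong refl) (auto simp: C1_def C2_def algebra_simps)
    also have "\<dots> = Af p d v m" using m by simp
    finally have "Af p d v m = (E1 - real_of_int ((int e - 1) * Qf d lam1)) - (E2 - real_of_int ((int e - 1) * Qf d lam2))"
      using E1 E2 by linarith
    moreover have "E1 \<in> \<int>" "E2 \<in> \<int>" using H l1(1) l2(1) unfolding E1_def E2_def by auto
    ultimately show "Af p d v m \<in> \<int>" by (simp add: Ints_diff)
  qed
qed

lemma S_char:
  assumes e: "e \<ge> 1" and d: "d \<ge> 1"
  shows "S_set d e v = {p. is_partition d p \<and> (\<forall>i<length p. Af p d v i \<in> \<int>)}"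
  unfolding S_set_def using part1[OF e d] by blast



lemma nt_main:
  fixes d v x z :: int
  assumes eq: "2*v*x = 2*d*z + d*x*(d-x)" and x: "0 < x" "x < d"
    and c: "(gcd d v = 1 \<and> d mod 4 \<noteq> 2) \<or> (gcd d v = 2 \<and> d mod 4 = 2)"
  shows False
  using c
proof
  assume c1: "gcd d v = 1 \<and> d mod 4 \<noteq> 2"
  have "d dvd (2*v*x)" using eq by (metis dvd_add dvd_mult dvd_triv_left mult.assoc)
  then have "d dvd 2*x*v" by (simp add: ac_simps)
  then have "d dvd 2*x" using c1 by (metis coprime_dvd_mult_left_iff coprime_iff_gcd_eq_1)
  then obtain t where t: "2*x = d*t" by blast
  have "t = 1"
  proof -
    have "0 < d*t" using t x by linarith
    then have "0 < t" using x by (simp add: zero_less_mult_iff)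
    moreover have "t < 2"
    proof (rule ccontr)
      assume "\<not> t < 2"
      then have "d*2 \<le> d*t" using x by (intro mult_left_mono) auto
      then show False using t x by linarith
    qed
    ultimately show ?thesis by simp
  qed
  then have dx: "d = 2*x" using t by simp
  have "2*x*v = 2*x*(2*z + x*x)" using eq unfolding dx by (simp add: algebra_simps)
  then have "v = 2*z + x*x" using x by simp
  moreover have "even x" using c1 dx by presburger
  ultimately have "even v" by auto
  moreover have "even d" using dx by simp
  ultimately have "2 dvd gcd d v" by simp
  then show False using c1 by simp
next
  assume c2: "gcd d v = 2 \<and> d mod 4 = 2"
  have "even d" using c2 by presburger
  then obtain m where dm: "d = 2*m" by blast
  have modd: "odd m" using c2 dm by presburger
  obtain w where vw: "v = 2*w" using c2 by (metis gcd_dvd2 dvdE)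
  have "gcd d v = 2 * gcd m w" unfolding dm vw by (simp add: gcd_mult_left)
  then have gmw: "gcd m w = 1" using c2 by simp
  have eq2: "2*w*x = 2*m*z + m*x*(2*m-x)" using eq unfolding dm vw by (simp add: algebra_simps)
  have "m dvd 2*w*x" using eq2 by (metis dvd_add dvd_mult dvd_triv_left mult.assoc)
  moreover have "coprime m (2*w)" using gmw modd
  proof -
    have "coprime m w" using gmw by (simp add: coprime_iff_gcd_eq_1)
    moreover have "coprime m 2" using modd by simp
    ultimately show ?thesis by (simp add: coprime_mult_right_iff)
  qed
  ultimately have "m dvd x" by (metis coprime_dvd_mult_right_iff)
  then obtain t where t: "x = m*t" by blast
  have mpos: "m > 0" using x dm by simp
  have "t = 1"
  proof -
    have "0 < m*t" "m*t < 2*m" using t x dm by auto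
    then have "0 < t" "t < 2" using mpos by (auto simp: zero_less_mult_iff mult_less_cancel_left)
    then show ?thesis by simp
  qed
  then have xm: "x = m" using t by simp
  have "m*(2*w) = m*(2*z + m*m)" using eq2 unfolding xm by (simp add: algebra_simps)
  then have "2*w = 2*z + m*m" using mpos by simp
  then have "m*m = 2*(w - z)" by (simp add: algebra_simps)
  then have "even (m*m)" by (metis dvd_triv_left)
  then show False using modd by simp
qed



lemma Af_two0: "Af [a,b] d v 0 = -(real a * real b)/2 + real_of_int v * real a / real d"
proof -
  have "{0<..<2::nat} = {1}" by auto
  then show ?thesis unfolding Af_def by simp
qed

lemma Af_two1: "Af [a,b] d v 1 = (real a * real b)/2 + real_of_int v * real b / real d"
proof -
  have "{1<..<2::nat} = {}" by auto
  then show ?thesis unfolding Af_def by simp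
qed

lemma two_good:
  assumes "a > 0" "b > 0" "a + b = d"
    "-(real a * real b)/2 + real_of_int v * real a / real d \<in> \<int>"
    "(real a * real b)/2 + real_of_int v * real b / real d \<in> \<int>"
  shows "is_partition d [a,b] \<and> (\<forall>i<length [a,b]. Af [a,b] d v i \<in> \<int>)"
proof -
  have "\<forall>i<2. Af [a,b] d v i \<in> \<int>"
  proof (intro allI impI)
    fix i :: nat assume "i < 2"
    then have "i = 0 \<or> i = 1" by auto
    then show "Af [a,b] d v i \<in> \<int>" using assms(4,5) by (auto simp only: Af_two0 Af_two1)
  qed
  then show ?thesis using assms unfolding is_partition_def by simp
qed

lemma single_good:
  assumes "d \<ge> 1"
  shows "is_partition d [d] \<and> (\<forall>i<length [d]. Af [d] d v i \<in> \<int>)"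
  using assms unfolding is_partition_def Af_def by auto

lemma first_part:
  assumes d: "d \<ge> 1" and part: "is_partition d p" and ne: "p \<noteq> [d]"
  shows "0 < p!0 \<and> p!0 < d \<and>
     Af p d v 0 = -(real (p!0) * (real d - real (p!0)))/2 + real_of_int v * real (p!0) / real d"
proof -
  define k where "k = length p"
  have pos: "\<forall>x\<in>set p. x > 0" and sm: "sum_list p = d" using part unfolding is_partition_def by auto
  have k0: "k > 0" using sm d unfolding k_def by (cases p) auto
  have k1: "k \<noteq> 1"
  proof
    assume "k = 1"
    then obtain x where "p = [x]" unfolding k_def by (cases p) auto
    then show False using sm ne by simp
  qed
  have split: "{..<k} = insert 0 {0<..<k}" using k0 by auto
  have "d = (\<Sum>j<k. p!j)" using sm unfolding k_def sum_list_sum_nth by (simp add: atLeast0LessThan)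
  also have "\<dots> = p!0 + (\<Sum>j\<in>{0<..<k}. p!j)" unfolding split by simp
  finally have dsum: "d = p!0 + (\<Sum>j\<in>{0<..<k}. p!j)" .
  have p0: "p!0 > 0" using pos k0 unfolding k_def by auto
  have "1 < k" using k0 k1 by simp
  then have p1: "p!1 > 0" using pos unfolding k_def by (simp add: nth_mem)
  have "p!1 \<le> (\<Sum>j\<in>{0<..<k}. p!j)"
    using k0 k1 by (intro member_le_sum) auto
  then have "p!0 < d" using dsum p1 by linarith
  moreover have "Af p d v 0 = -(real (p!0) * (real d - real (p!0)))/2 + real_of_int v * real (p!0) / real d"
    unfolding Af_def k_def[symmetric] using dsum by (simp add: algebra_simps of_nat_diff)
  ultimately show ?thesis using p0 by simp
qed



lemma no_other:
  assumes d: "d \<ge> 1" and part: "is_partition d p" and good: "\<forall>i<length p. Af p d v i \<in> \<int>"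
    and c: "(gcd (int d) v = 1 \<and> d mod 4 \<noteq> 2) \<or> (gcd (int d) v = 2 \<and> d mod 4 = 2)"
  shows "p = [d]"
proof (rule ccontr)
  assume ne: "p \<noteq> [d]"
  note fp = first_part[OF d part ne, of v]
  define x where "x = p!0"
  have lp: "0 < length p" using part d unfolding is_partition_def by (cases p) auto
  have "Af p d v 0 \<in> \<int>" using good lp by simp
  then obtain z where z: "Af p d v 0 = real_of_int z" by (auto elim: Ints_cases)
  have dpos: "real d > 0" using d by simp
  have "-(real x * (real d - real x))/2 + real_of_int v * real x / real d = real_of_int z"
    using z fp unfolding x_def by simp
  then have "real_of_int (2*v*int x) = real_of_int (2*int d*z + int d*int x*(int d-int x))"
    using dpos by (simp add: field_simps)
  then have eq: "2*v*int x = 2*int d*z + int d*int x*(int d-int x)" by (simp only: of_int_eq_iff)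
  have m4: "int d mod 4 = int (d mod 4)" by (simp add: of_nat_mod)
  have c': "(gcd (int d) v = 1 \<and> int d mod 4 \<noteq> 2) \<or> (gcd (int d) v = 2 \<and> int d mod 4 = 2)"
    using c unfolding m4 by linarith
  show False
    using nt_main[OF eq _ _ c'] fp unfolding x_def by simp
qed

lemma some_other:
  assumes d: "d \<ge> 1"
    and c: "\<not> ((gcd (int d) v = 1 \<and> d mod 4 \<noteq> 2) \<or> (gcd (int d) v = 2 \<and> d mod 4 = 2))"
  shows "\<exists>p. p \<noteq> [d] \<and> is_partition d p \<and> (\<forall>i<length p. Af p d v i \<in> \<int>)"
proof -
  define g where "g = gcd (int d) v"
  have gpos: "g > 0" using d unfolding g_def by simp
  have gd: "g dvd int d" "g dvd v" unfolding g_def by auto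
  have dpos: "real d > 0" using d by simp
  consider "g = 1" | "g = 2" | "g \<ge> 3" using gpos by linarith
  then show ?thesis
  proof cases
    case 1
    then have dm: "d mod 4 = 2" using c unfolding g_def by auto
    then have "even d" by presburger
    then obtain h where h: "d = 2*h" by blast
    have hodd: "odd h" using dm h by presburger
    have vodd: "odd v"
    proof
      assume "even v"
      moreover have "even (int d)" using h by simp
      ultimately have "2 dvd g" unfolding g_def by simp
      then show False using 1 by simp
    qed
    have "even (v - int h * int h)" using hodd vodd by simp
    then obtain t where t: "v - int h * int h = 2*t" by blast
    have rv: "real_of_int v = 2 * real_of_int t + real h * real h"
      using arg_cong[OF t, of real_of_int] by simp
    have hpos: "real h > 0" using h d by simp
    have e0: "-(real h * real h)/2 + real_of_int v * real h / real d = real_of_int t"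
      unfolding rv h using hpos by (simp add: field_simps)
    have e1: "(real h * real h)/2 + real_of_int v * real h / real d = real_of_int (t + int h * int h)"
      unfolding rv h using hpos by (simp add: field_simps)
    have i0: "-(real h * real h)/2 + real_of_int v * real h / real d \<in> \<int>" unfolding e0 by simp
    have i1: "(real h * real h)/2 + real_of_int v * real h / real d \<in> \<int>" unfolding e1 by simp
    have "is_partition d [h,h] \<and> (\<forall>i<length [h,h]. Af [h,h] d v i \<in> \<int>)"
      by (rule two_good[OF _ _ _ i0 i1]) (use h hpos in auto)
    then show ?thesis by (intro exI[of _ "[h,h]"]) auto
  next
    case 2
    then have dm: "d mod 4 \<noteq> 2" using c unfolding g_def by auto
    have "2 dvd int d" using gd 2 by simp
    then have "d mod 4 = 0" using dm by presburger
    then have "4 dvd d" by presburger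
    then obtain s where s: "d = 4*s" by blast
    obtain w where w: "v = 2*w" using gd 2 by blast
    define h where "h = 2*s"
    have spos: "real s > 0" using s d by simp
    have e0: "-(real h * real h)/2 + real_of_int v * real h / real d = real_of_int (w - 2*int s*int s)"
      unfolding w s h_def using spos by (simp add: field_simps)
    have e1: "(real h * real h)/2 + real_of_int v * real h / real d = real_of_int (w + 2*int s*int s)"
      unfolding w s h_def using spos by (simp add: field_simps)
    have i0: "-(real h * real h)/2 + real_of_int v * real h / real d \<in> \<int>" unfolding e0 by simp
    have i1: "(real h * real h)/2 + real_of_int v * real h / real d \<in> \<int>" unfolding e1 by simp
    have "is_partition d [h,h] \<and> (\<forall>i<length [h,h]. Af [h,h] d v i \<in> \<int>)"
      by (rule two_good[OF _ _ _ i0 i1]) (use s h_def spos in auto)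
    then show ?thesis by (intro exI[of _ "[h,h]"]) auto
  next
    case 3
    define G where "G = nat g"
    have gG: "g = int G" using gpos unfolding G_def by simp
    have "G dvd d" using gd(1) unfolding gG by simp
    then obtain M where M: "d = G*M" by blast
    obtain w where w: "v = g*w" using gd by blast
    have G3: "G \<ge> 3" using 3 gG by simp
    have Mpos: "M > 0" using M d by (cases M) auto
    define a where "a = 2*M"
    define b where "b = (G-2)*M"
    have ab: "a + b = d" unfolding a_def b_def M using G3 by (simp add: algebra_simps)
    have rG: "real (G-2) = real G - 2" using G3 by (simp add: of_nat_diff)
    have rM: "real M > 0" using Mpos by simp
    have rGp: "real G > 0" using G3 by simp
    have e0: "-(real a * real b)/2 + real_of_int v * real a / real d
       = real_of_int (- (int G - 2) * int M * int M + 2*w)"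
      unfolding a_def b_def w gG M using rM rGp rG by (simp add: field_simps)
    have e1: "(real a * real b)/2 + real_of_int v * real b / real d
       = real_of_int ((int G - 2) * int M * int M + (int G - 2)*w)"
      unfolding a_def b_def w gG M using rM rGp rG by (simp add: field_simps)
    have i0: "-(real a * real b)/2 + real_of_int v * real a / real d \<in> \<int>" unfolding e0 by simp
    have i1: "(real a * real b)/2 + real_of_int v * real b / real d \<in> \<int>" unfolding e1 by simp
    have "is_partition d [a,b] \<and> (\<forall>i<length [a,b]. Af [a,b] d v i \<in> \<int>)"
      by (rule two_good[OF _ _ _ i0 i1]) (use ab Mpos G3 in \<open>auto simp: a_def b_def\<close>)
    then show ?thesis by (intro exI[of _ "[a,b]"]) auto
  qed
qed


theorem lemma8p6:
  fixes d e :: nat and v :: int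
  assumes "e \<ge> 1" and "d \<ge> 1"
  shows "S_set d e v =
           {p. is_partition d p \<and>
               (\<forall>i<length p.
                  (1/2) * real (p ! i) *
                    (real (\<Sum>j<i. p ! j) - real (\<Sum>j\<in>{i<..<length p}. p ! j))
                  + real_of_int v * real (p ! i) / real d \<in> \<int>)}
       \<and> (S_set d e v = {[d]} \<longleftrightarrow>
            (gcd (int d) v = 1 \<and> d mod 4 \<noteq> 2) \<or> (gcd (int d) v = 2 \<and> d mod 4 = 2))"
proof -
  have S: "S_set d e v = {p. is_partition d p \<and> (\<forall>i<length p. Af p d v i \<in> \<int>)}"
    by (rule S_char[OF assms])
  have P2: "S_set d e v = {[d]} \<longleftrightarrow>
            (gcd (int d) v = 1 \<and> d mod 4 \<noteq> 2) \<or> (gcd (int d) v = 2 \<and> d mod 4 = 2)"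
  proof
    assume H: "S_set d e v = {[d]}"
    show "(gcd (int d) v = 1 \<and> d mod 4 \<noteq> 2) \<or> (gcd (int d) v = 2 \<and> d mod 4 = 2)"
    proof (rule ccontr)
      assume "\<not> ((gcd (int d) v = 1 \<and> d mod 4 \<noteq> 2) \<or> (gcd (int d) v = 2 \<and> d mod 4 = 2))"
      from some_other[OF assms(2) this] obtain p where
        "p \<noteq> [d]" "is_partition d p" "\<forall>i<length p. Af p d v i \<in> \<int>" by blast
      then have "p \<in> S_set d e v" unfolding S by simp
      then have "p \<in> {[d]}" using H by simp
      then show False using \<open>p \<noteq> [d]\<close> by simp
    qed
  next
    assume c: "(gcd (int d) v = 1 \<and> d mod 4 \<noteq> 2) \<or> (gcd (int d) v = 2 \<and> d mod 4 = 2)"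
    show "S_set d e v = {[d]}"
    proof (rule set_eqI)
      fix p
      show "p \<in> S_set d e v \<longleftrightarrow> p \<in> {[d]}"
      proof
        assume "p \<in> S_set d e v"
        then have "is_partition d p" "\<forall>i<length p. Af p d v i \<in> \<int>" unfolding S by simp_all
        then show "p \<in> {[d]}" using no_other[OF assms(2) _ _ c] by simp
      next
        assume "p \<in> {[d]}"
        then show "p \<in> S_set d e v" unfolding S using single_good[OF assms(2), of v] by simp
      qed
    qed
  qed
  have P1: "S_set d e v =
           {p. is_partition d p \<and>
               (\<forall>i<length p.
                  (1/2) * real (p ! i) *
                    (real (\<Sum>j<i. p ! j) - real (\<Sum>j\<in>{i<..<length p}. p ! j))
                  + real_of_int v * real (p ! i) / real d \<in> \<int>)}"
    unfolding S Af_def by (rule refl)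
  show ?thesis using P1 P2 by (rule conjI)
qed

end
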